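(* Let $n\ge 3$, let $K$ be a field, $S_n$ as defined below, and $P=a_1a_2\cdots a_nS_n$. Then: (1) $P$ is a prime ideal of the monoid $S_n$; (2) every prime ideal $Q$ of the algebra $K[S_n]$ with $Q\cap S_n\neq\emptyset$ contains $P$; (3) $K[P]$ is a prime ideal of $K[S_n]$ of height one, i.e. every nonzero prime ideal $P_0$ of $K[S_n]$ with $P_0\subseteq K[P]$ equals $K[P]$.
   Context: For $n\ge 3$, $S_n$ denotes the monoid with generators $a_1,\dots,a_n$ and defining relations $a_1a_2\cdots a_n=a_{\sigma(1)}a_{\sigma(2)}\cdots a_{\sigma(n)}$ for all $\sigma$ in the cyclic subgroup of $\operatorname{Sym}_n$ generated by the cycle $(1,2,\dots,n)$. An ideal $P\neq S$ of a monoid $S$ is prime if $aSb\subseteq P$ with $a,b\in S$ implies $a\in P$ or $b\in P$. For an ideal $I$ of $S_n$, $K[I]$ denotes the $K$-linear span of $I$ in $K[S_n]$. *)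

theory Defs
  imports Main
begin

text \<open>Words over the alphabet {0..<n}; letter i stands for the generator a_(i+1).\<close>

definition words :: "nat \<Rightarrow> nat list set" where
  "words n = {w. set w \<subseteq> {..<n}}"

text \<open>Elementary moves: replace a cyclic rotation of a_1...a_n inside a word by another one.
  (rotate k [0..<n]) is a_(sigma(1))...a_(sigma(n)) for sigma = (1 2 ... n)^k.\<close>

definition elem_rel :: "nat \<Rightarrow> (nat list \<times> nat list) set" where
  "elem_rel n = {(u @ rotate i [0..<n] @ v, u @ rotate j [0..<n] @ v) | u v i j.
                   u \<in> words n \<and> v \<in> words n}"

definition cong_S :: "nat \<Rightarrow> (nat list \<times> nat list) set" where
  "cong_S n = (elem_rel n)\<^sup>*"

definition Sn :: "nat \<Rightarrow> nat list set set" where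
  "Sn n = words n // cong_S n"

definition cls :: "nat \<Rightarrow> nat list \<Rightarrow> nat list set" where
  "cls n w = cong_S n `` {w}"

definition Smult :: "nat \<Rightarrow> nat list set \<Rightarrow> nat list set \<Rightarrow> nat list set" where
  "Smult n X Y = cong_S n `` {x @ y | x y. x \<in> X \<and> y \<in> Y}"

definition mon_ideal :: "'a set \<Rightarrow> ('a \<Rightarrow> 'a \<Rightarrow> 'a) \<Rightarrow> 'a set \<Rightarrow> bool" where
  "mon_ideal S m I \<longleftrightarrow> I \<subseteq> S \<and> (\<forall>s\<in>S. \<forall>x\<in>I. m s x \<in> I \<and> m x s \<in> I)"

definition mon_prime :: "'a set \<Rightarrow> ('a \<Rightarrow> 'a \<Rightarrow> 'a) \<Rightarrow> 'a set \<Rightarrow> bool" where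
  "mon_prime S m P \<longleftrightarrow> mon_ideal S m P \<and> P \<noteq> S \<and>
     (\<forall>a\<in>S. \<forall>b\<in>S. (\<forall>s\<in>S. m (m a s) b \<in> P) \<longrightarrow> a \<in> P \<or> b \<in> P)"

definition supp :: "('a \<Rightarrow> 'k::zero) \<Rightarrow> 'a set" where
  "supp f = {x. f x \<noteq> 0}"

definition alg :: "nat \<Rightarrow> (nat list set \<Rightarrow> 'k::field) set" where
  "alg n = {f. finite (supp f) \<and> supp f \<subseteq> Sn n}"

definition amult :: "nat \<Rightarrow> (nat list set \<Rightarrow> 'k::field) \<Rightarrow> (nat list set \<Rightarrow> 'k) \<Rightarrow> (nat list set \<Rightarrow> 'k)" where
  "amult n f g = (\<lambda>z. \<Sum>(x, y) \<in> {(x, y). x \<in> supp f \<and> y \<in> supp g \<and> Smult n x y = z}. f x * g y)"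

definition basis :: "nat list set \<Rightarrow> (nat list set \<Rightarrow> 'k::field)" where
  "basis s = (\<lambda>x. if x = s then 1 else 0)"

definition alg_ideal :: "nat \<Rightarrow> (nat list set \<Rightarrow> 'k::field) set \<Rightarrow> bool" where
  "alg_ideal n I \<longleftrightarrow> I \<subseteq> alg n \<and> (\<lambda>_. 0) \<in> I \<and>
     (\<forall>f\<in>I. \<forall>g\<in>I. (\<lambda>x. f x + g x) \<in> I) \<and> (\<forall>f\<in>I. (\<lambda>x. - f x) \<in> I) \<and>
     (\<forall>r\<in>alg n. \<forall>f\<in>I. amult n r f \<in> I \<and> amult n f r \<in> I)"

definition alg_prime :: "nat \<Rightarrow> (nat list set \<Rightarrow> 'k::field) set \<Rightarrow> bool" where
  "alg_prime n Q \<longleftrightarrow> alg_ideal n Q \<and> Q \<noteq> alg n \<and>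
     (\<forall>a\<in>alg n. \<forall>b\<in>alg n. (\<forall>r\<in>alg n. amult n (amult n a r) b \<in> Q) \<longrightarrow> a \<in> Q \<or> b \<in> Q)"

definition lin_span :: "nat \<Rightarrow> nat list set set \<Rightarrow> (nat list set \<Rightarrow> 'k::field) set" where
  "lin_span n I = {f \<in> alg n. supp f \<subseteq> I}"

end

theory Submission
  imports Defs
begin


lemma elem_rel_sym: "(a,b) \<in> elem_rel n \<Longrightarrow> (b,a) \<in> elem_rel n"
  unfolding elem_rel_def by blast

lemma cong_sym: "(a,b) \<in> cong_S n \<Longrightarrow> (b,a) \<in> cong_S n"
  unfolding cong_S_def
  by (induction rule: rtrancl_induct) (auto intro: converse_rtrancl_into_rtrancl elem_rel_sym)

lemma cong_trans: "(a,b) \<in> cong_S n \<Longrightarrow> (b,c) \<in> cong_S n \<Longrightarrow> (a,c) \<in> cong_S n"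
  unfolding cong_S_def by (rule rtrancl_trans)

lemma cong_refl[simp]: "(a,a) \<in> cong_S n"
  unfolding cong_S_def by simp

lemma elem_cong: "(a,b) \<in> elem_rel n \<Longrightarrow> (a,b) \<in> cong_S n"
  unfolding cong_S_def by simp

lemma words_append[simp]: "u @ v \<in> words n \<longleftrightarrow> u \<in> words n \<and> v \<in> words n"
  unfolding words_def by auto

lemma words_Cons[simp]: "x # v \<in> words n \<longleftrightarrow> x < n \<and> v \<in> words n"
  unfolding words_def by auto

lemma words_Nil[simp]: "[] \<in> words n"
  unfolding words_def by auto

lemma rot_words[simp]: "rotate i [0..<n] \<in> words n"
  unfolding words_def by auto

lemma elem_app_right: "(a,b) \<in> elem_rel n \<Longrightarrow> c \<in> words n \<Longrightarrow> (a@c, b@c) \<in> elem_rel n"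
proof -
  assume "(a,b) \<in> elem_rel n" "c \<in> words n"
  then obtain u v i j where "a = u @ rotate i [0..<n] @ v" "b = u @ rotate j [0..<n] @ v"
    "u \<in> words n" "v \<in> words n" unfolding elem_rel_def by blast
  then show ?thesis using \<open>c \<in> words n\<close> unfolding elem_rel_def
    by (intro CollectI exI[of _ u] exI[of _ "v@c"] exI[of _ i] exI[of _ j]) auto
qed

lemma elem_app_left: "(a,b) \<in> elem_rel n \<Longrightarrow> c \<in> words n \<Longrightarrow> (c@a, c@b) \<in> elem_rel n"
proof -
  assume "(a,b) \<in> elem_rel n" "c \<in> words n"
  then obtain u v i j where "a = u @ rotate i [0..<n] @ v" "b = u @ rotate j [0..<n] @ v"
    "u \<in> words n" "v \<in> words n" unfolding elem_rel_def by blast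
  then show ?thesis using \<open>c \<in> words n\<close> unfolding elem_rel_def
    by (intro CollectI exI[of _ "c@u"] exI[of _ "v"] exI[of _ i] exI[of _ j]) auto
qed

lemma cong_app_right: "(a,b) \<in> cong_S n \<Longrightarrow> c \<in> words n \<Longrightarrow> (a@c, b@c) \<in> cong_S n"
  unfolding cong_S_def
  by (induction rule: rtrancl_induct) (auto intro: rtrancl_into_rtrancl elem_app_right)

lemma cong_app_left: "(a,b) \<in> cong_S n \<Longrightarrow> c \<in> words n \<Longrightarrow> (c@a, c@b) \<in> cong_S n"
  unfolding cong_S_def
  by (induction rule: rtrancl_induct) (auto intro: rtrancl_into_rtrancl elem_app_left)

lemma elem_length: "(a,b) \<in> elem_rel n \<Longrightarrow> length a = length b"
  unfolding elem_rel_def by auto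

lemma elem_words: "(a,b) \<in> elem_rel n \<Longrightarrow> b \<in> words n"
  unfolding elem_rel_def by auto

lemma cong_length: "(a,b) \<in> cong_S n \<Longrightarrow> length a = length b"
  unfolding cong_S_def
  by (induction rule: rtrancl_induct) (auto dest: elem_length)

lemma cong_words: "(a,b) \<in> cong_S n \<Longrightarrow> a \<in> words n \<Longrightarrow> b \<in> words n"
  unfolding cong_S_def
  by (induction rule: rtrancl_induct) (auto dest: elem_words)

definition hasrot :: "nat \<Rightarrow> nat list \<Rightarrow> bool" where
  "hasrot n w \<longleftrightarrow> (\<exists>u v i. w = u @ rotate i [0..<n] @ v)"

lemma elem_hasrot: "(a,b) \<in> elem_rel n \<Longrightarrow> hasrot n b \<and> hasrot n a"
  unfolding elem_rel_def hasrot_def by blast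

lemma cong_hasrot: "(a,b) \<in> cong_S n \<Longrightarrow> hasrot n a \<Longrightarrow> hasrot n b"
  unfolding cong_S_def
  by (induction rule: rtrancl_induct) (auto dest: elem_hasrot)

lemma cong_reduced: "(a,b) \<in> cong_S n \<Longrightarrow> \<not> hasrot n a \<Longrightarrow> b = a"
  unfolding cong_S_def
  by (induction rule: rtrancl_induct) (auto dest: elem_hasrot)

lemma cls_mem: "w \<in> cls n v \<longleftrightarrow> (v,w) \<in> cong_S n"
  unfolding cls_def by auto

lemma cls_eq_iff: "cls n v = cls n w \<longleftrightarrow> (v,w) \<in> cong_S n"
proof
  assume "cls n v = cls n w"
  then have "w \<in> cls n v" unfolding cls_def by auto
  then show "(v,w) \<in> cong_S n" unfolding cls_def by auto
next
  assume vw: "(v,w) \<in> cong_S n"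
  show "cls n v = cls n w" unfolding cls_def
    using vw cong_sym[OF vw] cong_trans[of v w n] cong_trans[of w v n] by auto
qed

lemma cls_reduced: assumes "\<not> hasrot n w" shows "cls n w = {w}"
proof
  show "cls n w \<subseteq> {w}" unfolding cls_def using cong_reduced[of w _ n] assms by auto
  show "{w} \<subseteq> cls n w" unfolding cls_def by auto
qed

lemma Sn_iff: "c \<in> Sn n \<longleftrightarrow> (\<exists>w\<in>words n. c = cls n w)"
  unfolding Sn_def quotient_def cls_def by auto

lemma Smult_cls: assumes v: "v \<in> words n" and w: "w \<in> words n"
  shows "Smult n (cls n v) (cls n w) = cls n (v@w)"
proof -
  define M where "M = {x @ y |x y. x \<in> cls n v \<and> y \<in> cls n w}"
  have A: "\<And>q. q \<in> M \<Longrightarrow> (v@w, q) \<in> cong_S n"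
  proof -
    fix q assume "q \<in> M"
    then obtain x y where q: "q = x@y" "x \<in> cls n v" "y \<in> cls n w"
      unfolding M_def by blast
    have q2: "(v,x) \<in> cong_S n" "(w,y) \<in> cong_S n" using q(2,3) unfolding cls_mem by auto
    have "x \<in> words n" using cong_words q2 v by blast
    have "(v@w, x@w) \<in> cong_S n" using cong_app_right q2 w by blast
    moreover have "(x@w, x@y) \<in> cong_S n" using cong_app_left q2 \<open>x \<in> words n\<close> by blast
    ultimately show "(v@w, q) \<in> cong_S n" unfolding q(1) by (rule cong_trans)
  qed
  have B: "v@w \<in> M" unfolding M_def by (intro CollectI exI[of _ v] exI[of _ w]) (simp add: cls_mem)
  have "cong_S n `` M = cls n (v@w)"
  proof
    show "cong_S n `` M \<subseteq> cls n (v@w)"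
    proof
      fix p assume "p \<in> cong_S n `` M"
      then obtain q where "q \<in> M" "(q,p) \<in> cong_S n" by blast
      then show "p \<in> cls n (v@w)" unfolding cls_mem using A cong_trans by blast
    qed
    show "cls n (v@w) \<subseteq> cong_S n `` M"
      using B unfolding cls_def by blast
  qed
  then show ?thesis unfolding Smult_def M_def .
qed

lemma rot_eq: "i \<le> n \<Longrightarrow> rotate i [0..<n] = [i..<n] @ [0..<i]"
proof (cases "i = n")
  case True
  then show ?thesis by (simp add: rotate_drop_take)
next
  case False
  assume "i \<le> n"
  then have "i < n" using False by simp
  then show ?thesis by (simp add: rotate_drop_take)
qed

lemma rot_step: "i < n \<Longrightarrow> [i] @ rotate (Suc i) [0..<n] = rotate i [0..<n] @ [i]"
proof -
  assume i: "i < n"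
  have "rotate (Suc i) [0..<n] = [Suc i..<n] @ [0..<Suc i]" using i rot_eq[of "Suc i" n] by simp
  moreover have "rotate i [0..<n] = [i..<n] @ [0..<i]" using i rot_eq[of i n] by simp
  ultimately show ?thesis using i by (simp add: upt_conv_Cons)
qed

lemma elem_intro: "u \<in> words n \<Longrightarrow> v \<in> words n \<Longrightarrow>
  (u @ rotate i [0..<n] @ v, u @ rotate j [0..<n] @ v) \<in> elem_rel n"
  unfolding elem_rel_def by blast

lemma Z_comm_letter: "i < n \<Longrightarrow> ([i] @ [0..<n], [0..<n] @ [i]) \<in> cong_S n"
proof -
  assume i: "i < n"
  have "([i] @ rotate 0 [0..<n] @ [] , [i] @ rotate (Suc i) [0..<n] @ []) \<in> elem_rel n"
    using i by (intro elem_intro) auto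
  then have 1: "([i] @ [0..<n], [i] @ rotate (Suc i) [0..<n]) \<in> cong_S n" by (simp add: elem_cong)
  have "([] @ rotate i [0..<n] @ [i] , [] @ rotate 0 [0..<n] @ [i]) \<in> elem_rel n"
    using i by (intro elem_intro) auto
  then have 2: "(rotate i [0..<n] @ [i], [0..<n] @ [i]) \<in> cong_S n" by (simp add: elem_cong)
  show ?thesis using cong_trans[OF 1] 2 rot_step[OF i] by simp
qed

lemma Z_comm: "u \<in> words n \<Longrightarrow> (u @ [0..<n], [0..<n] @ u) \<in> cong_S n"
proof (induction u)
  case Nil
  then show ?case by simp
next
  case (Cons i u)
  then have i: "i < n" and u: "u \<in> words n" by auto
  have "(i # u @ [0..<n], i # [0..<n] @ u) \<in> cong_S n"
    using cong_app_left[OF Cons.IH[OF u], of "[i]"] i by simp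
  moreover have "(([i] @ [0..<n]) @ u, ([0..<n] @ [i]) @ u) \<in> cong_S n"
    using cong_app_right[OF Z_comm_letter[OF i] u] .
  ultimately show ?case using cong_trans by fastforce
qed

lemma hasrot_cong_Z: "w \<in> words n \<Longrightarrow> hasrot n w \<Longrightarrow> \<exists>u\<in>words n. (w, [0..<n] @ u) \<in> cong_S n"
proof -
  assume w: "w \<in> words n" and "hasrot n w"
  then obtain u v i where wd: "w = u @ rotate i [0..<n] @ v" unfolding hasrot_def by blast
  then have u: "u \<in> words n" and v: "v \<in> words n" using w by auto
  have "(w, u @ rotate 0 [0..<n] @ v) \<in> elem_rel n" unfolding wd using u v by (rule elem_intro)
  then have 1: "(w, (u @ [0..<n]) @ v) \<in> cong_S n" by (simp add: elem_cong)
  have "((u @ [0..<n]) @ v, ([0..<n] @ u) @ v) \<in> cong_S n" using cong_app_right[OF Z_comm[OF u] v] .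
  then show ?thesis using 1 cong_trans u v by (metis append.assoc words_append)
qed

lemma reduced_ext_aux:
  assumes n: "n \<ge> 2" and u: "\<not> hasrot n u" and v: "\<not> hasrot n v"
    and h: "hasrot n (u @ [x] @ v)"
  shows "(u \<noteq> [] \<and> x = Suc (last u) mod n) \<or> (v \<noteq> [] \<and> hd v = Suc x mod n)"
proof -
  define W where "W = u @ [x] @ v"
  obtain p q i where wd: "W = p @ rotate i [0..<n] @ q" using h unfolding hasrot_def W_def by blast
  define r where "r = rotate i [0..<n]"
  define k where "k = length p"
  define m where "m = length u"
  have lr: "length r = n" unfolding r_def by simp
  have W2: "W = p @ r @ q" using wd r_def by simp
  have lW: "length W = m + 1 + length v" unfolding W_def m_def by simp
  have lW2: "length W = k + n + length q" using W2 lr k_def by simp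
  show ?thesis
  proof (cases "k + n \<le> m")
    case True
    have "take m W = u" unfolding W_def m_def by simp
    also have "take m W = p @ r @ take (m - k - n) q" using True lr unfolding W2 k_def by simp
    finally have "u = p @ rotate i [0..<n] @ take (m - k - n) q" unfolding r_def ..
    then have "hasrot n u" unfolding hasrot_def by blast
    then show ?thesis using u by simp
  next
    case c1: False
    show ?thesis
    proof (cases "m + 1 \<le> k")
      case True
      have "drop (m+1) W = v" unfolding W_def m_def by simp
      also have "drop (m+1) W = drop (m+1) p @ r @ q" using True unfolding W2 k_def by simp
      finally have "v = drop (m+1) p @ rotate i [0..<n] @ q" unfolding r_def ..
      then have "hasrot n v" unfolding hasrot_def by blast
      then show ?thesis using v by simp
    next
      case False
      then have km: "k \<le> m" "m < k + n" using c1 by auto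
      define j where "j = m - k"
      have jn: "j < n" using km j_def by simp
      have Wr: "\<And>l. l < n \<Longrightarrow> W ! (k + l) = (i + l) mod n"
        using lr unfolding W2 k_def r_def by (simp add: nth_append nth_rotate)
      have Wm: "W ! m = x" unfolding W_def m_def by simp
      have x: "x = (i + j) mod n" using Wr[OF jn] Wm km j_def by simp
      show ?thesis
      proof (cases "j = 0")
        case True
        have "m + 1 < length W" using lW2 km True j_def n by simp
        then have vne: "v \<noteq> []" using lW by auto
        have "W ! (m+1) = hd v" unfolding W_def m_def using vne by (simp add: nth_append hd_conv_nth)
        moreover have "W ! (m + 1) = (i + 1) mod n" using Wr[of 1] n True j_def km by simp
        ultimately have "hd v = Suc x mod n" using x True by (simp add: mod_Suc_eq)
        then show ?thesis using vne by simp
      next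
        case False
        then have mpos: "m > 0" using j_def km by simp
        then have une: "u \<noteq> []" unfolding m_def by auto
        have mk: "m - 1 = k + (j - 1)" using False j_def km by simp
        have "j - 1 < n" using jn by simp
        moreover have "W ! (m - 1) = last u" unfolding W_def m_def using une by (simp add: nth_append last_conv_nth)
        ultimately have "last u = (i + (j - 1)) mod n" using Wr[of "j-1"] mk by simp
        then have "Suc (last u) mod n = Suc (i + (j - 1)) mod n" by (simp add: mod_Suc_eq)
        also have "Suc (i + (j - 1)) = i + j" using False by simp
        finally have "Suc (last u) mod n = x" using x by simp
        then show ?thesis using une by simp
      qed
    qed
  qed
qed

lemma pick3: "(n::nat) \<ge> 3 \<Longrightarrow> \<exists>x\<in>{0,1,2}. x \<noteq> a \<and> Suc x mod n \<noteq> b"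
proof -
  assume n: "n \<ge> 3"
  have m1: "Suc 0 mod n = 1" "Suc 1 mod n = 2" using n by auto
  have m3: "Suc 2 mod n \<in> {0,3}"
  proof (cases "n = 3")
    case True then show ?thesis by simp
  next
    case False then have "3 < n" using n by simp
    then show ?thesis by simp
  qed
  show ?thesis using m1 m3 by (cases "a = 0"; cases "a = 1"; cases "b = 1"; cases "b=2") auto
qed

lemma hasrot_Nil: "n > 0 \<Longrightarrow> \<not> hasrot n []"
  unfolding hasrot_def by auto

lemma reduced_ext:
  assumes n: "n \<ge> 3" and u: "\<not> hasrot n u" and v: "\<not> hasrot n v"
  shows "\<exists>x<n. \<not> hasrot n (u @ [x] @ v)"
proof -
  obtain x where x: "x \<in> {0,1,2}" "x \<noteq> Suc (last u) mod n" "Suc x mod n \<noteq> hd v"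
    using pick3[OF n] by blast
  have "x < n" using x n by auto
  moreover have "\<not> hasrot n (u @ [x] @ v)" using reduced_ext_aux[of n u v x] n u v x by auto
  ultimately show ?thesis by blast
qed

definition zw :: "nat \<Rightarrow> nat \<Rightarrow> nat list" where
  "zw n k = concat (replicate k [0..<n])"

lemma zw_words[simp]: "zw n k \<in> words n"
  unfolding zw_def words_def by auto

lemma zw_Suc: "zw n (Suc k) = [0..<n] @ zw n k"
  unfolding zw_def by simp

lemma Z_words[simp]: "[0..<n] \<in> words n"
  unfolding words_def by auto

lemma divides_pow: "w \<in> words n \<Longrightarrow> \<exists>t\<in>words n. (w @ t, zw n (length w)) \<in> cong_S n"
proof (induction w rule: rev_induct)
  case Nil
  show ?case by (rule bexI[of _ "[]"]) (auto simp: zw_def)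
next
  case (snoc i w)
  then have i: "i < n" and w: "w \<in> words n" by auto
  obtain t where t: "t \<in> words n" "(w @ t, zw n (length w)) \<in> cong_S n" using snoc.IH w by blast
  define tl0 where "tl0 = [Suc i..<n] @ [0..<i]"
  have rt: "rotate i [0..<n] = [i] @ tl0" using rot_eq[of i n] i unfolding tl0_def by (simp add: upt_conv_Cons)
  have tl0w: "tl0 \<in> words n" unfolding tl0_def words_def using i by auto
  have "(w @ rotate i [0..<n] @ t, w @ rotate 0 [0..<n] @ t) \<in> elem_rel n"
    using w t by (intro elem_intro) auto
  then have 1: "((w @ [i]) @ tl0 @ t, (w @ [0..<n]) @ t) \<in> cong_S n" using rt by (simp add: elem_cong)
  have 2: "((w @ [0..<n]) @ t, ([0..<n] @ w) @ t) \<in> cong_S n" using cong_app_right[OF Z_comm[OF w] t(1)] .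
  have 3: "([0..<n] @ w @ t, [0..<n] @ zw n (length w)) \<in> cong_S n"
    using cong_app_left[OF t(2) Z_words] .
  have 4: "((w @ [i]) @ tl0 @ t, ([0..<n] @ w) @ t) \<in> cong_S n" using cong_trans[OF 1 2] .
  have 5: "((w @ [i]) @ tl0 @ t, [0..<n] @ zw n (length w)) \<in> cong_S n" using cong_trans[OF 4] 3 by simp
  have 6: "((w @ [i]) @ (tl0 @ t), zw n (length (w @ [i]))) \<in> cong_S n" using 5 by (simp add: zw_Suc)
  have 7: "tl0 @ t \<in> words n" using tl0w t by simp
  show ?case using 6 7 by blast
qed



definition Pset :: "nat \<Rightarrow> nat list set set" where
  "Pset n = {Smult n (cls n [0..<n]) s | s. s \<in> Sn n}"

lemma cls_Sn: "w \<in> words n \<Longrightarrow> cls n w \<in> Sn n"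
  using Sn_iff by blast

lemma hasrot_app: "hasrot n w \<Longrightarrow> hasrot n (v @ w) \<and> hasrot n (w @ v)"
proof -
  assume "hasrot n w"
  then obtain a b i where "w = a @ rotate i [0..<n] @ b" unfolding hasrot_def by blast
  then have "v @ w = (v @ a) @ rotate i [0..<n] @ b" "w @ v = a @ rotate i [0..<n] @ (b @ v)" by auto
  then show ?thesis unfolding hasrot_def by blast
qed

lemma hasrot_Z: "hasrot n ([0..<n] @ w)"
  unfolding hasrot_def by (rule exI[of _ "[]"], rule exI[of _ w], rule exI[of _ 0]) simp

lemma Pset_iff: assumes w: "w \<in> words n" shows "cls n w \<in> Pset n \<longleftrightarrow> hasrot n w"
proof
  assume "cls n w \<in> Pset n"
  then obtain s where s: "s \<in> Sn n" "cls n w = Smult n (cls n [0..<n]) s" unfolding Pset_def by blast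
  then obtain w' where w': "w' \<in> words n" "s = cls n w'" using Sn_iff by blast
  have "cls n w = cls n ([0..<n] @ w')" using s w' Smult_cls[OF Z_words w'(1)] by simp
  then have c: "(w, [0..<n] @ w') \<in> cong_S n" using cls_eq_iff by blast
  show "hasrot n w"
  proof (rule ccontr)
    assume "\<not> hasrot n w"
    then have "[0..<n] @ w' = w" using cong_reduced[OF c] by simp
    then show False using hasrot_Z[of n w'] \<open>\<not> hasrot n w\<close> by simp
  qed
next
  assume "hasrot n w"
  then obtain u where u: "u \<in> words n" "(w, [0..<n] @ u) \<in> cong_S n" using hasrot_cong_Z w by blast
  have "cls n w = Smult n (cls n [0..<n]) (cls n u)"
    using Smult_cls[OF Z_words u(1)] u(2) cls_eq_iff by metis
  then show "cls n w \<in> Pset n" unfolding Pset_def using cls_Sn[OF u(1)] by blast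
qed

lemma Smult_Sn: "x \<in> Sn n \<Longrightarrow> y \<in> Sn n \<Longrightarrow> Smult n x y \<in> Sn n"
  using Sn_iff Smult_cls cls_Sn words_append by metis

lemma Smult_assoc: "x \<in> Sn n \<Longrightarrow> y \<in> Sn n \<Longrightarrow> t \<in> Sn n \<Longrightarrow>
   Smult n (Smult n x y) t = Smult n x (Smult n y t)"
proof -
  assume "x \<in> Sn n" "y \<in> Sn n" "t \<in> Sn n"
  then obtain a b c where abc: "a \<in> words n" "b \<in> words n" "c \<in> words n"
    "x = cls n a" "y = cls n b" "t = cls n c" using Sn_iff by metis
  show ?thesis unfolding abc(4-6) using abc(1-3) by (simp add: Smult_cls)
qed

lemma z_central: "y \<in> Sn n \<Longrightarrow> Smult n (cls n [0..<n]) y = Smult n y (cls n [0..<n])"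
proof -
  assume "y \<in> Sn n"
  then obtain a where a: "a \<in> words n" "y = cls n a" using Sn_iff by metis
  have "cls n (a @ [0..<n]) = cls n ([0..<n] @ a)" using Z_comm[OF a(1)] cls_eq_iff by blast
  then show ?thesis unfolding a(2) using a(1) by (simp add: Smult_cls)
qed

lemma Pset_sub: "Pset n \<subseteq> Sn n"
  unfolding Pset_def using Smult_Sn cls_Sn[OF Z_words] by blast

lemma Pset_ideal: "s \<in> Sn n \<Longrightarrow> c \<in> Pset n \<Longrightarrow> Smult n s c \<in> Pset n \<and> Smult n c s \<in> Pset n"
proof -
  assume s: "s \<in> Sn n" and c: "c \<in> Pset n"
  then obtain v where v: "v \<in> words n" "s = cls n v" using Sn_iff by metis
  obtain w where w: "w \<in> words n" "c = cls n w" using c Pset_sub Sn_iff by blast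
  have hw: "hasrot n w" using c w Pset_iff by blast
  show ?thesis unfolding v(2) w(2) using v(1) w(1) hasrot_app[OF hw, of v]
    by (simp add: Smult_cls Pset_iff)
qed

lemma e_notin: "n > 0 \<Longrightarrow> cls n [] \<notin> Pset n"
  using Pset_iff[of "[]" n] hasrot_Nil by simp

lemma mon_part:
  assumes n: "n \<ge> 3"
  shows "mon_prime (Sn n) (Smult n) (Pset n)"
  unfolding mon_prime_def mon_ideal_def
proof (intro conjI ballI impI)
  show "Pset n \<subseteq> Sn n" by (rule Pset_sub)
  fix s x assume "s \<in> Sn n" "x \<in> Pset n"
  then show "Smult n s x \<in> Pset n" "Smult n x s \<in> Pset n" using Pset_ideal by blast+
next
  show "Pset n \<noteq> Sn n" using e_notin[of n] n cls_Sn[of "[]" n] by auto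
next
  fix a b assume a: "a \<in> Sn n" and b: "b \<in> Sn n"
    and H: "\<forall>s\<in>Sn n. Smult n (Smult n a s) b \<in> Pset n"
  show "a \<in> Pset n \<or> b \<in> Pset n"
  proof (rule ccontr)
    assume "\<not> (a \<in> Pset n \<or> b \<in> Pset n)"
    then have na: "a \<notin> Pset n" and nb: "b \<notin> Pset n" by auto
    obtain u where u: "u \<in> words n" "a = cls n u" using a Sn_iff by metis
    obtain v where v: "v \<in> words n" "b = cls n v" using b Sn_iff by metis
    have hu: "\<not> hasrot n u" using na u Pset_iff by blast
    have hv: "\<not> hasrot n v" using nb v Pset_iff by blast
    obtain x where x: "x < n" "\<not> hasrot n (u @ [x] @ v)" using reduced_ext[OF n hu hv] by blast
    have xw: "[x] \<in> words n" using x by simp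
    have "Smult n (Smult n a (cls n [x])) b = cls n (u @ [x] @ v)"
      unfolding u(2) v(2) using u(1) v(1) xw by (simp add: Smult_cls)
    moreover have "cls n (u @ [x] @ v) \<notin> Pset n" using Pset_iff x u(1) v(1) xw by simp
    ultimately show False using H cls_Sn[OF xw] by metis
  qed
qed



definition sc :: "'k::field \<Rightarrow> nat list set \<Rightarrow> nat list set \<Rightarrow> 'k" where
  "sc a c = (\<lambda>x. if x = c then a else 0)"

lemma basis_sc: "basis c = sc 1 c"
  unfolding basis_def sc_def by simp

lemma supp_sc: "supp (sc a c) \<subseteq> {c}"
  unfolding supp_def sc_def by auto

lemma sc_alg: "c \<in> Sn n \<Longrightarrow> sc a c \<in> alg n"
  unfolding alg_def using supp_sc[of a c] finite_subset by fastforce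

lemma basis_alg: "c \<in> Sn n \<Longrightarrow> (basis c :: _ \<Rightarrow> 'k::field) \<in> alg n"
  unfolding basis_sc by (rule sc_alg)

lemma basis_self[simp]: "basis c c = 1"
  unfolding basis_def by simp

lemma supp_basis: "supp (basis c :: _ \<Rightarrow> 'k::field) = {c}"
  unfolding supp_def basis_def by auto

lemma supp_amult: "supp (amult n f g) \<subseteq> (\<lambda>(x,y). Smult n x y) ` (supp f \<times> supp g)"
proof
  fix z assume z: "z \<in> supp (amult n f g)"
  show "z \<in> (\<lambda>(x,y). Smult n x y) ` (supp f \<times> supp g)"
  proof (rule ccontr)
    assume nz: "z \<notin> (\<lambda>(x,y). Smult n x y) ` (supp f \<times> supp g)"
    have E: "{(x, y). x \<in> supp f \<and> y \<in> supp g \<and> Smult n x y = z} = {}"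
      using nz by blast
    have "amult n f g z = 0" unfolding amult_def E by simp
    then show False using z unfolding supp_def by simp
  qed
qed

lemma alg_finite: "f \<in> alg n \<Longrightarrow> finite (supp f)"
  unfolding alg_def by simp

lemma alg_sub: "f \<in> alg n \<Longrightarrow> supp f \<subseteq> Sn n"
  unfolding alg_def by simp

lemma amult_alg: assumes f: "f \<in> alg n" and g: "g \<in> alg n" shows "amult n f g \<in> alg n"
proof -
  have fin: "finite ((\<lambda>(x,y). Smult n x y) ` (supp f \<times> supp g))"
    using alg_finite[OF f] alg_finite[OF g] by simp
  have "(\<lambda>(x,y). Smult n x y) ` (supp f \<times> supp g) \<subseteq> Sn n"
  proof
    fix q assume "q \<in> (\<lambda>(x,y). Smult n x y) ` (supp f \<times> supp g)"
    then obtain x y where "x \<in> supp f" "y \<in> supp g" "q = Smult n x y" by blast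
    then show "q \<in> Sn n" using alg_sub[OF f] alg_sub[OF g] Smult_Sn by blast
  qed
  then have "supp (amult n f g) \<subseteq> Sn n" using supp_amult[of n f g] by (rule order_trans[rotated])
  moreover have "finite (supp (amult n f g))" using supp_amult[of n f g] fin by (rule finite_subset)
  ultimately show ?thesis unfolding alg_def by simp
qed

lemma amult_alt:
  assumes A: "finite A" "supp f \<subseteq> A" and B: "finite B" "supp g \<subseteq> B"
  shows "amult n f g w = (\<Sum>x\<in>A. \<Sum>y\<in>B. if Smult n x y = w then f x * g y else 0)"
proof -
  have "amult n f g w = (\<Sum>(x, y) \<in> {(x, y). x \<in> supp f \<and> y \<in> supp g \<and> Smult n x y = w}. f x * g y)"
    unfolding amult_def by simp
  also have "\<dots> = (\<Sum>p \<in> A \<times> B. (case p of (x,y) \<Rightarrow> if Smult n x y = w then f x * g y else 0))"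
  proof (rule sum.mono_neutral_cong_left)
    show "finite (A \<times> B)" using A B by simp
    show "{(x, y). x \<in> supp f \<and> y \<in> supp g \<and> Smult n x y = w} \<subseteq> A \<times> B" using A B by auto
    show "\<forall>i\<in>A \<times> B - {(x, y). x \<in> supp f \<and> y \<in> supp g \<and> Smult n x y = w}.
       (case i of (x, y) \<Rightarrow> if Smult n x y = w then f x * g y else 0) = 0"
    proof
      fix i assume i: "i \<in> A \<times> B - {(x, y). x \<in> supp f \<and> y \<in> supp g \<and> Smult n x y = w}"
      obtain a b where ab: "i = (a,b)" by fastforce
      have "\<not> (a \<in> supp f \<and> b \<in> supp g \<and> Smult n a b = w)" using i ab by blast
      then show "(case i of (x, y) \<Rightarrow> if Smult n x y = w then f x * g y else 0) = 0"
        unfolding ab supp_def by (cases "Smult n a b = w") simp_all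
    qed
    show "\<And>p. p \<in> {(x, y). x \<in> supp f \<and> y \<in> supp g \<and> Smult n x y = w} \<Longrightarrow>
       (case p of (x, y) \<Rightarrow> f x * g y) = (case p of (x, y) \<Rightarrow> if Smult n x y = w then f x * g y else 0)"
      by clarsimp
  qed
  also have "\<dots> = (\<Sum>x\<in>A. \<Sum>y\<in>B. if Smult n x y = w then f x * g y else 0)"
    by (rule sum.cartesian_product[symmetric])
  finally show ?thesis .
qed

lemma amult_sc: "amult n (sc a c) (sc b d) = sc (a * b) (Smult n c d)"
proof
  fix w
  have "amult n (sc a c) (sc b d) w = (\<Sum>x\<in>{c}. \<Sum>y\<in>{d}. if Smult n x y = w then sc a c x * sc b d y else 0)"
    using supp_sc by (intro amult_alt) auto
  also have "\<dots> = sc (a * b) (Smult n c d) w" unfolding sc_def by auto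
  finally show "amult n (sc a c) (sc b d) w = sc (a * b) (Smult n c d) w" .
qed

lemma amult_basis: "amult n (basis c) (basis d) = (basis (Smult n c d) :: _ \<Rightarrow> 'k::field)"
  unfolding basis_sc amult_sc by simp

lemma triple_left:
  assumes f: "f \<in> alg n" and g: "g \<in> alg n" and h: "h \<in> alg n"
  shows "amult n (amult n f g) h w = (\<Sum>x\<in>supp f. \<Sum>y\<in>supp g. \<Sum>t\<in>supp h.
     if Smult n (Smult n x y) t = w then f x * g y * h t else 0)"
proof -
  define D where "D = (\<lambda>(x,y). Smult n x y) ` (supp f \<times> supp g)"
  have fA: "finite (supp f)" "finite (supp g)" "finite (supp h)" using f g h alg_finite by auto
  have fD: "finite D" unfolding D_def using fA by simp
  have sD: "supp (amult n f g) \<subseteq> D" unfolding D_def by (rule supp_amult)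
  have "amult n (amult n f g) h w = (\<Sum>p\<in>D. \<Sum>t\<in>supp h. if Smult n p t = w then amult n f g p * h t else 0)"
    using fD sD fA by (intro amult_alt) auto
  also have "\<dots> = (\<Sum>p\<in>D. \<Sum>t\<in>supp h. \<Sum>x\<in>supp f. \<Sum>y\<in>supp g.
      if Smult n x y = p then (if Smult n p t = w then f x * g y * h t else 0) else 0)"
  proof (intro sum.cong refl)
    fix p t
    have e: "amult n f g p = (\<Sum>x\<in>supp f. \<Sum>y\<in>supp g. if Smult n x y = p then f x * g y else 0)"
      using fA by (intro amult_alt) auto
    show "(if Smult n p t = w then amult n f g p * h t else 0) = (\<Sum>x\<in>supp f. \<Sum>y\<in>supp g.
      if Smult n x y = p then (if Smult n p t = w then f x * g y * h t else 0) else 0)"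
    proof (cases "Smult n p t = w")
      case True
      have "(if Smult n p t = w then amult n f g p * h t else 0) = amult n f g p * h t" using True by simp
      also have "\<dots> = (\<Sum>x\<in>supp f. \<Sum>y\<in>supp g. (if Smult n x y = p then f x * g y else 0) * h t)"
        by (simp only: e sum_distrib_right)
      also have "\<dots> = (\<Sum>x\<in>supp f. \<Sum>y\<in>supp g.
        if Smult n x y = p then (if Smult n p t = w then f x * g y * h t else 0) else 0)"
        by (intro sum.cong refl) (simp add: True)
      finally show ?thesis .
    next
      case False
      have "(\<Sum>x\<in>supp f. \<Sum>y\<in>supp g.
        if Smult n x y = p then (if Smult n p t = w then f x * g y * h t else 0) else 0) = 0"
        by (intro sum.neutral ballI) (simp add: False)
      then show ?thesis using False by simp
    qed
  qed
  also have "\<dots> = (\<Sum>p\<in>D. \<Sum>x\<in>supp f. \<Sum>t\<in>supp h. \<Sum>y\<in>supp g.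
      if Smult n x y = p then (if Smult n p t = w then f x * g y * h t else 0) else 0)"
    by (rule sum.cong[OF refl], rule sum.swap)
  also have "\<dots> = (\<Sum>p\<in>D. \<Sum>x\<in>supp f. \<Sum>y\<in>supp g. \<Sum>t\<in>supp h.
      if Smult n x y = p then (if Smult n p t = w then f x * g y * h t else 0) else 0)"
    by (rule sum.cong[OF refl], rule sum.cong[OF refl], rule sum.swap)
  also have "\<dots> = (\<Sum>x\<in>supp f. \<Sum>p\<in>D. \<Sum>y\<in>supp g. \<Sum>t\<in>supp h.
      if Smult n x y = p then (if Smult n p t = w then f x * g y * h t else 0) else 0)"
    by (rule sum.swap)
  also have "\<dots> = (\<Sum>x\<in>supp f. \<Sum>y\<in>supp g. \<Sum>p\<in>D. \<Sum>t\<in>supp h.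
      if Smult n x y = p then (if Smult n p t = w then f x * g y * h t else 0) else 0)"
    by (rule sum.cong[OF refl], rule sum.swap)
  also have "\<dots> = (\<Sum>x\<in>supp f. \<Sum>y\<in>supp g. \<Sum>t\<in>supp h. \<Sum>p\<in>D.
      if Smult n x y = p then (if Smult n p t = w then f x * g y * h t else 0) else 0)"
    by (rule sum.cong[OF refl], rule sum.cong[OF refl], rule sum.swap)
  also have "\<dots> = (\<Sum>x\<in>supp f. \<Sum>y\<in>supp g. \<Sum>t\<in>supp h.
     if Smult n (Smult n x y) t = w then f x * g y * h t else 0)"
  proof (intro sum.cong refl)
    fix x y t assume "x \<in> supp f" "y \<in> supp g"
    then have "Smult n x y \<in> D" unfolding D_def by auto
    then show "(\<Sum>p\<in>D. if Smult n x y = p then (if Smult n p t = w then f x * g y * h t else 0) else 0)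
      = (if Smult n (Smult n x y) t = w then f x * g y * h t else 0)"
      using fD by simp
  qed
  finally show ?thesis .
qed

lemma triple_right:
  assumes f: "f \<in> alg n" and g: "g \<in> alg n" and h: "h \<in> alg n"
  shows "amult n f (amult n g h) w = (\<Sum>x\<in>supp f. \<Sum>y\<in>supp g. \<Sum>t\<in>supp h.
     if Smult n x (Smult n y t) = w then f x * g y * h t else 0)"
proof -
  define D where "D = (\<lambda>(x,y). Smult n x y) ` (supp g \<times> supp h)"
  have fA: "finite (supp f)" "finite (supp g)" "finite (supp h)" using f g h alg_finite by auto
  have fD: "finite D" unfolding D_def using fA by simp
  have sD: "supp (amult n g h) \<subseteq> D" unfolding D_def by (rule supp_amult)
  have "amult n f (amult n g h) w = (\<Sum>x\<in>supp f. \<Sum>q\<in>D. if Smult n x q = w then f x * amult n g h q else 0)"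
    using fD sD fA by (intro amult_alt) auto
  also have "\<dots> = (\<Sum>x\<in>supp f. \<Sum>q\<in>D. \<Sum>y\<in>supp g. \<Sum>t\<in>supp h.
      if Smult n y t = q then (if Smult n x q = w then f x * g y * h t else 0) else 0)"
  proof (intro sum.cong refl)
    fix x q
    have e: "amult n g h q = (\<Sum>y\<in>supp g. \<Sum>t\<in>supp h. if Smult n y t = q then g y * h t else 0)"
      using fA by (intro amult_alt) auto
    show "(if Smult n x q = w then f x * amult n g h q else 0) = (\<Sum>y\<in>supp g. \<Sum>t\<in>supp h.
      if Smult n y t = q then (if Smult n x q = w then f x * g y * h t else 0) else 0)"
    proof (cases "Smult n x q = w")
      case True
      have "(if Smult n x q = w then f x * amult n g h q else 0) = f x * amult n g h q" using True by simp
      also have "\<dots> = (\<Sum>y\<in>supp g. \<Sum>t\<in>supp h. f x * (if Smult n y t = q then g y * h t else 0))"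
        by (simp only: e sum_distrib_left)
      also have "\<dots> = (\<Sum>y\<in>supp g. \<Sum>t\<in>supp h.
        if Smult n y t = q then (if Smult n x q = w then f x * g y * h t else 0) else 0)"
        by (intro sum.cong refl) (simp add: True mult.assoc)
      finally show ?thesis .
    next
      case False
      have "(\<Sum>y\<in>supp g. \<Sum>t\<in>supp h.
        if Smult n y t = q then (if Smult n x q = w then f x * g y * h t else 0) else 0) = 0"
        by (intro sum.neutral ballI) (simp add: False)
      then show ?thesis using False by simp
    qed
  qed
  also have "\<dots> = (\<Sum>x\<in>supp f. \<Sum>y\<in>supp g. \<Sum>q\<in>D. \<Sum>t\<in>supp h.
      if Smult n y t = q then (if Smult n x q = w then f x * g y * h t else 0) else 0)"
    by (rule sum.cong[OF refl], rule sum.swap)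
  also have "\<dots> = (\<Sum>x\<in>supp f. \<Sum>y\<in>supp g. \<Sum>t\<in>supp h. \<Sum>q\<in>D.
      if Smult n y t = q then (if Smult n x q = w then f x * g y * h t else 0) else 0)"
    by (rule sum.cong[OF refl], rule sum.cong[OF refl], rule sum.swap)
  also have "\<dots> = (\<Sum>x\<in>supp f. \<Sum>y\<in>supp g. \<Sum>t\<in>supp h.
     if Smult n x (Smult n y t) = w then f x * g y * h t else 0)"
  proof (intro sum.cong refl)
    fix x y t assume "y \<in> supp g" "t \<in> supp h"
    then have "Smult n y t \<in> D" unfolding D_def by auto
    then show "(\<Sum>q\<in>D. if Smult n y t = q then (if Smult n x q = w then f x * g y * h t else 0) else 0)
      = (if Smult n x (Smult n y t) = w then f x * g y * h t else 0)"
      using fD by simp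
  qed
  finally show ?thesis .
qed

lemma amult_assoc:
  assumes f: "f \<in> alg n" and g: "g \<in> alg n" and h: "h \<in> alg n"
  shows "amult n (amult n f g) h = amult n f (amult n g h)"
proof
  fix w
  show "amult n (amult n f g) h w = amult n f (amult n g h) w"
    unfolding triple_left[OF f g h] triple_right[OF f g h]
  proof (intro sum.cong refl)
    fix x y t assume "x \<in> supp f" "y \<in> supp g" "t \<in> supp h"
    then have "Smult n (Smult n x y) t = Smult n x (Smult n y t)"
      using alg_sub[OF f] alg_sub[OF g] alg_sub[OF h] by (intro Smult_assoc) auto
    then show "(if Smult n (Smult n x y) t = w then f x * g y * h t else 0) =
         (if Smult n x (Smult n y t) = w then f x * g y * h t else 0)" by simp
  qed
qed

lemma central_alg:
  assumes r: "r \<in> alg n"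
  shows "amult n (basis (cls n [0..<n])) r = amult n r (basis (cls n [0..<n]))"
proof
  fix w
  let ?z = "cls n [0..<n]"
  have fr: "finite (supp r)" using r alg_finite by auto
  have "amult n (basis ?z) r w = (\<Sum>x\<in>{?z}. \<Sum>y\<in>supp r. if Smult n x y = w then basis ?z x * r y else 0)"
    using fr by (intro amult_alt) (auto simp: supp_basis)
  also have "\<dots> = (\<Sum>y\<in>supp r. if Smult n y ?z = w then r y * basis ?z ?z else 0)"
  proof -
    have "(\<Sum>x\<in>{?z}. \<Sum>y\<in>supp r. if Smult n x y = w then basis ?z x * r y else 0) =
      (\<Sum>y\<in>supp r. if Smult n ?z y = w then basis ?z ?z * r y else 0)" by simp
    also have "\<dots> = (\<Sum>y\<in>supp r. if Smult n y ?z = w then r y * basis ?z ?z else 0)"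
    proof (rule sum.cong[OF refl])
      fix y assume "y \<in> supp r"
      then have e: "Smult n ?z y = Smult n y ?z" using alg_sub[OF r] z_central by blast
      show "(if Smult n ?z y = w then basis ?z ?z * r y else 0) = (if Smult n y ?z = w then r y * basis ?z ?z else 0)"
        unfolding e by (simp add: mult.commute)
    qed
    finally show ?thesis .
  qed
  also have "\<dots> = (\<Sum>y\<in>supp r. \<Sum>x\<in>{?z}. if Smult n y x = w then r y * basis ?z x else 0)"
    by simp
  also have "\<dots> = amult n r (basis ?z) w"
    using fr by (intro amult_alt[symmetric]) (auto simp: supp_basis)
  finally show "amult n (basis ?z) r w = amult n r (basis ?z) w" .
qed



lemma sum_in_ideal:
  fixes I :: "(nat list set \<Rightarrow> 'k::field) set"
  assumes I: "alg_ideal n I" and F: "finite F" and G: "\<And>c. c \<in> F \<Longrightarrow> G c \<in> I"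
  shows "(\<lambda>x. \<Sum>c\<in>F. G c x) \<in> I"
  using F G
proof (induction F rule: finite_induct)
  case empty
  then show ?case using I unfolding alg_ideal_def by simp
next
  case (insert a F)
  have "(\<lambda>x. \<Sum>c\<in>insert a F. G c x) = (\<lambda>x. G a x + (\<Sum>c\<in>F. G c x))"
    using insert.hyps by simp
  moreover have "G a \<in> I" using insert.prems by simp
  moreover have "(\<lambda>x. \<Sum>c\<in>F. G c x) \<in> I" using insert by simp
  ultimately show ?case using I unfolding alg_ideal_def by simp
qed

lemma span_decomp: assumes f: "f \<in> alg n" shows "f = (\<lambda>x. \<Sum>c\<in>supp f. sc (f c) c x)"
proof
  fix x
  have fin: "finite (supp f)" using alg_finite[OF f] .
  have "(\<Sum>c\<in>supp f. sc (f c) c x) = (\<Sum>c\<in>supp f. if x = c then f c else 0)"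
    unfolding sc_def by simp
  also have "\<dots> = (if x \<in> supp f then f x else 0)" using fin by simp
  also have "\<dots> = f x" unfolding supp_def by simp
  finally show "f x = (\<Sum>c\<in>supp f. sc (f c) c x)" by simp
qed

lemma KP_sub:
  fixes Q :: "(nat list set \<Rightarrow> 'k::field) set"
  assumes I: "alg_ideal n Q" and z: "basis (cls n [0..<n]) \<in> Q"
  shows "lin_span n (Pset n) \<subseteq> Q"
proof
  fix f :: "nat list set \<Rightarrow> 'k" assume "f \<in> lin_span n (Pset n)"
  then have f: "f \<in> alg n" and sf: "supp f \<subseteq> Pset n" unfolding lin_span_def by auto
  have "\<And>c. c \<in> supp f \<Longrightarrow> sc (f c) c \<in> Q"
  proof -
    fix c assume "c \<in> supp f"
    then have "c \<in> Pset n" using sf by auto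
    then obtain s where s: "s \<in> Sn n" "c = Smult n (cls n [0..<n]) s" unfolding Pset_def by blast
    have "amult n (basis (cls n [0..<n])) (sc (f c) s) = sc (f c) c"
      unfolding basis_sc amult_sc s(2) by simp
    moreover have "amult n (basis (cls n [0..<n])) (sc (f c) s) \<in> Q"
      using I z sc_alg[OF s(1)] unfolding alg_ideal_def by blast
    ultimately show "sc (f c) c \<in> Q" by simp
  qed
  then have "(\<lambda>x. \<Sum>c\<in>supp f. sc (f c) c x) \<in> Q"
    by (rule sum_in_ideal[OF I alg_finite[OF f]])
  then show "f \<in> Q" using span_decomp[OF f] by simp
qed

lemma z_Sn: "cls n [0..<n] \<in> Sn n"
  by (rule cls_Sn[OF Z_words])

lemma prime_step:
  fixes Q :: "(nat list set \<Rightarrow> 'k::field) set"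
  assumes Q: "alg_prime n Q" and b: "b \<in> alg n"
    and H: "amult n (basis (cls n [0..<n])) b \<in> Q"
  shows "basis (cls n [0..<n]) \<in> Q \<or> b \<in> Q"
proof -
  let ?z = "cls n [0..<n]"
  have bz: "basis ?z \<in> alg n" using basis_alg[OF z_Sn] .
  have I: "alg_ideal n Q" using Q unfolding alg_prime_def by simp
  have "\<forall>r\<in>alg n. amult n (amult n (basis ?z) r) b \<in> Q"
  proof
    fix r :: "nat list set \<Rightarrow> 'k" assume r: "r \<in> alg n"
    have "amult n (amult n (basis ?z) r) b = amult n (amult n r (basis ?z)) b"
      using central_alg[OF r] by simp
    also have "\<dots> = amult n r (amult n (basis ?z) b)" using amult_assoc[OF r bz b] .
    finally show "amult n (amult n (basis ?z) r) b \<in> Q"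
      using I H r unfolding alg_ideal_def by simp
  qed
  then show ?thesis using Q bz b unfolding alg_prime_def by blast
qed

lemma zpow_step: "Smult n (cls n [0..<n]) (cls n (zw n k)) = cls n (zw n (Suc k))"
  by (simp add: Smult_cls zw_Suc)

lemma z_from_pow:
  fixes Q :: "(nat list set \<Rightarrow> 'k::field) set"
  assumes Q: "alg_prime n Q" shows "basis (cls n (zw n (Suc m))) \<in> Q \<Longrightarrow> basis (cls n [0..<n]) \<in> Q"
proof (induction m)
  case 0
  then show ?case by (simp add: zw_def)
next
  case (Suc m)
  have "amult n (basis (cls n [0..<n])) (basis (cls n (zw n (Suc m)))) = basis (cls n (zw n (Suc (Suc m))))"
    unfolding amult_basis zpow_step ..
  then have "basis (cls n [0..<n]) \<in> Q \<or> basis (cls n (zw n (Suc m))) \<in> Q"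
    using prime_step[OF Q basis_alg[OF cls_Sn[OF zw_words]]] Suc.prems by metis
  then show ?case using Suc.IH by blast
qed

lemma z_from_s:
  fixes Q :: "(nat list set \<Rightarrow> 'k::field) set"
  assumes Q: "alg_prime n Q" and s: "s \<in> Sn n" and bs: "basis s \<in> Q"
  shows "basis (cls n [0..<n]) \<in> Q"
proof -
  have I: "alg_ideal n Q" using Q unfolding alg_prime_def by simp
  obtain w where w: "w \<in> words n" "s = cls n w" using s Sn_iff by metis
  obtain t where t: "t \<in> words n" "(w @ t, zw n (length w)) \<in> cong_S n" using divides_pow[OF w(1)] by blast
  have "Smult n s (cls n t) = cls n (zw n (length w))"
    unfolding w(2) using Smult_cls[OF w(1) t(1)] t(2) cls_eq_iff by metis
  then have "amult n (basis s) (basis (cls n t)) = (basis (cls n (zw n (length w))) :: _ \<Rightarrow> 'k)"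
    unfolding amult_basis by simp
  moreover have "amult n (basis s) (basis (cls n t)) \<in> Q"
    using I bs basis_alg[OF cls_Sn[OF t(1)]] unfolding alg_ideal_def by blast
  ultimately have b1: "basis (cls n (zw n (length w))) \<in> Q" by simp
  have "amult n (basis (cls n [0..<n])) (basis (cls n (zw n (length w)))) \<in> Q"
    using I b1 basis_alg[OF z_Sn] unfolding alg_ideal_def by blast
  then have "basis (cls n (zw n (Suc (length w)))) \<in> Q"
    unfolding amult_basis zpow_step .
  then show ?thesis using z_from_pow[OF Q] by blast
qed



definition clen :: "nat list set \<Rightarrow> nat" where
  "clen c = length (SOME w. w \<in> c)"

lemma clen_cls: "clen (cls n w) = length w"
proof -
  have "w \<in> cls n w" by (simp add: cls_mem)
  then have "(SOME w'. w' \<in> cls n w) \<in> cls n w" by (rule someI)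
  then have "(w, SOME w'. w' \<in> cls n w) \<in> cong_S n" by (simp add: cls_mem)
  then show ?thesis unfolding clen_def using cong_length by metis
qed

lemma max_exists: "finite S \<Longrightarrow> S \<noteq> {} \<Longrightarrow> \<exists>c\<in>S. \<forall>p\<in>S. (f p :: nat) \<le> f c"
proof -
  assume fS: "finite S" and ne: "S \<noteq> {}"
  have "Max (f ` S) \<in> f ` S" using fS ne by simp
  then obtain c where c: "c \<in> S" "f c = Max (f ` S)" by auto
  have "\<forall>p\<in>S. f p \<le> f c" using c fS by simp
  then show ?thesis using c by blast
qed

lemma lin_span_iff: "f \<in> lin_span n P \<longleftrightarrow> finite (supp f) \<and> supp f \<subseteq> Sn n \<and> supp f \<subseteq> P"
  unfolding lin_span_def alg_def by auto

lemma KP_ideal: "alg_ideal n (lin_span n (Pset n) :: (nat list set \<Rightarrow> 'k::field) set)"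
  unfolding alg_ideal_def
proof (intro conjI ballI)
  show "lin_span n (Pset n) \<subseteq> (alg n :: (nat list set \<Rightarrow> 'k) set)" unfolding lin_span_def by auto
  show "(\<lambda>_. 0) \<in> (lin_span n (Pset n) :: (nat list set \<Rightarrow> 'k) set)"
    unfolding lin_span_iff supp_def by simp
next
  fix f g :: "nat list set \<Rightarrow> 'k" assume f: "f \<in> lin_span n (Pset n)" and g: "g \<in> lin_span n (Pset n)"
  have "supp (\<lambda>x. f x + g x) \<subseteq> supp f \<union> supp g" unfolding supp_def by auto
  then show "(\<lambda>x. f x + g x) \<in> lin_span n (Pset n)" using f g unfolding lin_span_iff
    by (meson finite_UnI finite_subset le_sup_iff order_trans)
next
  fix f :: "nat list set \<Rightarrow> 'k" assume f: "f \<in> lin_span n (Pset n)"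
  have "supp (\<lambda>x. - f x) = supp f" unfolding supp_def by auto
  then show "(\<lambda>x. - f x) \<in> lin_span n (Pset n)" using f unfolding lin_span_iff by simp
next
  fix r f :: "nat list set \<Rightarrow> 'k" assume r: "r \<in> alg n" and f: "f \<in> lin_span n (Pset n)"
  have fa: "f \<in> alg n" and sf: "supp f \<subseteq> Pset n" using f unfolding lin_span_def by auto
  have 1: "supp (amult n r f) \<subseteq> Pset n"
  proof
    fix q assume "q \<in> supp (amult n r f)"
    then obtain x y where "x \<in> supp r" "y \<in> supp f" "q = Smult n x y" using supp_amult by blast
    then show "q \<in> Pset n" using Pset_ideal alg_sub[OF r] sf by blast
  qed
  have 2: "supp (amult n f r) \<subseteq> Pset n"
  proof
    fix q assume "q \<in> supp (amult n f r)"
    then obtain x y where "x \<in> supp f" "y \<in> supp r" "q = Smult n x y" using supp_amult by blast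
    then show "q \<in> Pset n" using Pset_ideal alg_sub[OF r] sf by blast
  qed
  show "amult n r f \<in> lin_span n (Pset n)" using 1 amult_alg[OF r fa] unfolding lin_span_def by simp
  show "amult n f r \<in> lin_span n (Pset n)" using 2 amult_alg[OF fa r] unfolding lin_span_def by simp
qed

lemma not_span: "a \<in> alg n \<Longrightarrow> a \<notin> lin_span n P \<Longrightarrow> \<exists>c\<in>supp a. c \<notin> P"
  unfolding lin_span_def by auto

lemma KP_primepart:
  fixes a b :: "nat list set \<Rightarrow> 'k::field"
  assumes n: "n \<ge> 3" and a: "a \<in> alg n" and b: "b \<in> alg n"
    and H: "\<forall>r\<in>alg n. amult n (amult n a r) b \<in> lin_span n (Pset n)"
  shows "a \<in> lin_span n (Pset n) \<or> b \<in> lin_span n (Pset n)"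
proof (rule ccontr)
  assume "\<not> (a \<in> lin_span n (Pset n) \<or> b \<in> lin_span n (Pset n))"
  then have na: "a \<notin> lin_span n (Pset n)" and nb: "b \<notin> lin_span n (Pset n)" by auto
  define Sa where "Sa = supp a - Pset n"
  define Sb where "Sb = supp b - Pset n"
  have fSa: "finite Sa" "Sa \<noteq> {}" unfolding Sa_def using alg_finite[OF a] not_span[OF a na] by auto
  have fSb: "finite Sb" "Sb \<noteq> {}" unfolding Sb_def using alg_finite[OF b] not_span[OF b nb] by auto
  obtain c where c: "c \<in> Sa" "\<forall>p\<in>Sa. clen p \<le> clen c" using max_exists[OF fSa] by blast
  obtain d where d: "d \<in> Sb" "\<forall>p\<in>Sb. clen p \<le> clen d" using max_exists[OF fSb] by blast
  have cS: "c \<in> Sn n" using c(1) alg_sub[OF a] unfolding Sa_def by auto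
  have dS: "d \<in> Sn n" using d(1) alg_sub[OF b] unfolding Sb_def by auto
  obtain u where u: "u \<in> words n" "c = cls n u" using cS Sn_iff by metis
  obtain v where v: "v \<in> words n" "d = cls n v" using dS Sn_iff by metis
  have hu: "\<not> hasrot n u" using c(1) u Pset_iff unfolding Sa_def by blast
  have hv: "\<not> hasrot n v" using d(1) v Pset_iff unfolding Sb_def by blast
  obtain x where x: "x < n" "\<not> hasrot n (u @ [x] @ v)" using reduced_ext[OF n hu hv] by blast
  have xw: "[x] \<in> words n" using x by simp
  define X where "X = cls n [x]"
  define T where "T = cls n (u @ [x] @ v)"
  have XS: "X \<in> Sn n" unfolding X_def using cls_Sn[OF xw] .
  have rA: "(basis X :: nat list set \<Rightarrow> 'k) \<in> alg n" using basis_alg[OF XS] .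
  have TP: "T \<notin> Pset n" unfolding T_def using Pset_iff x u(1) v(1) xw by simp
  have Tr: "T = {u @ [x] @ v}" unfolding T_def using cls_reduced[OF x(2)] .
  have key: "\<And>p t. p \<in> supp a \<Longrightarrow> t \<in> supp b \<Longrightarrow> Smult n (Smult n p X) t = T \<longleftrightarrow> (p = c \<and> t = d)"
  proof -
    fix p t assume p: "p \<in> supp a" and t: "t \<in> supp b"
    obtain w1 where w1: "w1 \<in> words n" "p = cls n w1" using p alg_sub[OF a] Sn_iff by blast
    obtain w2 where w2: "w2 \<in> words n" "t = cls n w2" using t alg_sub[OF b] Sn_iff by blast
    have e: "Smult n (Smult n p X) t = cls n (w1 @ [x] @ w2)"
      unfolding w1(2) w2(2) X_def using w1(1) w2(1) xw by (simp add: Smult_cls)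
    show "Smult n (Smult n p X) t = T \<longleftrightarrow> (p = c \<and> t = d)"
    proof
      assume "p = c \<and> t = d"
      then show "Smult n (Smult n p X) t = T"
        unfolding T_def X_def u(2) v(2) using u(1) v(1) xw by (simp add: Smult_cls)
    next
      assume "Smult n (Smult n p X) t = T"
      then have "cls n (u @ [x] @ v) = cls n (w1 @ [x] @ w2)" using e unfolding T_def by simp
      then have "(u @ [x] @ v, w1 @ [x] @ w2) \<in> cong_S n" using cls_eq_iff by blast
      then have eq: "w1 @ [x] @ w2 = u @ [x] @ v" using cong_reduced x(2) by blast
      have h1: "\<not> hasrot n w1" using hasrot_app[of n w1 "[x] @ w2"] x(2) eq by auto
      have h2: "\<not> hasrot n w2" using hasrot_app[of n w2 "w1 @ [x]"] x(2) eq by auto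
      have "p \<in> Sa" unfolding Sa_def using p h1 w1 Pset_iff by blast
      then have l1: "length w1 \<le> length u" using c(2) w1(2) u(2) clen_cls by metis
      have "t \<in> Sb" unfolding Sb_def using t h2 w2 Pset_iff by blast
      then have l2: "length w2 \<le> length v" using d(2) w2(2) v(2) clen_cls by metis
      have "length w1 + 1 + length w2 = length u + 1 + length v" using arg_cong[OF eq, of length] by simp
      then have "length w1 = length u" using l1 l2 by simp
      then have "w1 = u \<and> [x] @ w2 = [x] @ v" using eq append_eq_append_conv by blast
      then show "p = c \<and> t = d" using w1(2) w2(2) u(2) v(2) by simp
    qed
  qed
  have sX: "supp (basis X :: nat list set \<Rightarrow> 'k) = {X}" by (rule supp_basis)
  have fa: "finite (supp a)" and fb: "finite (supp b)" using alg_finite a b by auto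
  have "amult n (amult n a (basis X)) b T = (\<Sum>p\<in>supp a. \<Sum>y\<in>supp (basis X :: nat list set \<Rightarrow> 'k). \<Sum>t\<in>supp b.
     if Smult n (Smult n p y) t = T then a p * basis X y * b t else 0)"
    by (rule triple_left[OF a rA b])
  also have "\<dots> = (\<Sum>p\<in>supp a. \<Sum>t\<in>supp b. if Smult n (Smult n p X) t = T then a p * basis X X * b t else 0)"
    unfolding sX by simp
  also have "\<dots> = (\<Sum>p\<in>supp a. \<Sum>t\<in>supp b. if Smult n (Smult n p X) t = T then a p * b t else 0)"
    by (simp only: basis_self mult_1_right)
  also have "\<dots> = (\<Sum>p\<in>supp a. \<Sum>t\<in>supp b. if p = c then (if t = d then a p * b t else 0) else 0)"
  proof (intro sum.cong refl)
    fix p t assume "p \<in> supp a" "t \<in> supp b"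
    then show "(if Smult n (Smult n p X) t = T then a p * b t else 0) = (if p = c then (if t = d then a p * b t else 0) else 0)"
      using key by simp
  qed
  also have "\<dots> = (\<Sum>p\<in>supp a. if p = c then a p * b d else 0)"
  proof (rule sum.cong[OF refl])
    fix p
    have dd: "d \<in> supp b" using d(1) unfolding Sb_def by simp
    show "(\<Sum>t\<in>supp b. if p = c then (if t = d then a p * b t else 0) else 0) = (if p = c then a p * b d else 0)"
    proof (cases "p = c")
      case True
      have "(\<Sum>t\<in>supp b. if t = d then a p * b t else 0) = a p * b d"
        using sum.delta[OF fb, of d "\<lambda>t. a p * b t"] dd by simp
      then show ?thesis using True by simp
    next
      case False
      then show ?thesis by simp
    qed
  qed
  also have "\<dots> = a c * b d"
    using sum.delta[OF fa, of c "\<lambda>p. a p * b d"] c(1) unfolding Sa_def by simp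
  finally have val: "amult n (amult n a (basis X)) b T = a c * b d" .
  have "a c \<noteq> 0" "b d \<noteq> 0" using c(1) d(1) unfolding Sa_def Sb_def supp_def by auto
  then have "T \<in> supp (amult n (amult n a (basis X)) b)" unfolding supp_def using val by simp
  moreover have "supp (amult n (amult n a (basis X)) b) \<subseteq> Pset n" using H rA unfolding lin_span_def by blast
  ultimately show False using TP by blast
qed

lemma KP_prime:
  assumes n: "n \<ge> 3"
  shows "alg_prime n (lin_span n (Pset n) :: (nat list set \<Rightarrow> 'k::field) set)"
  unfolding alg_prime_def
proof (intro conjI ballI impI)
  show "alg_ideal n (lin_span n (Pset n) :: (nat list set \<Rightarrow> 'k::field) set)" by (rule KP_ideal)
  have e: "cls n [] \<in> Sn n" using cls_Sn[of "[]" n] by simp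
  have "(basis (cls n []) :: nat list set \<Rightarrow> 'k) \<in> alg n" using basis_alg[OF e] .
  moreover have "(basis (cls n []) :: nat list set \<Rightarrow> 'k) \<notin> lin_span n (Pset n)"
    using e_notin[of n] n unfolding lin_span_def by (auto simp: supp_def basis_def)
  ultimately show "(lin_span n (Pset n) :: (nat list set \<Rightarrow> 'k::field) set) \<noteq> alg n" by blast
next
  fix a b :: "nat list set \<Rightarrow> 'k" assume "a \<in> alg n" "b \<in> alg n"
    "\<forall>r\<in>alg n. amult n (amult n a r) b \<in> lin_span n (Pset n)"
  then show "a \<in> lin_span n (Pset n) \<or> b \<in> lin_span n (Pset n)" using KP_primepart[OF n] by blast
qed



definition Lset :: "nat \<Rightarrow> nat list set set" where
  "Lset m = {c. \<forall>w\<in>c. m \<le> length w}"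

lemma height_aux:
  fixes P0 :: "(nat list set \<Rightarrow> 'k::field) set"
  assumes Q: "alg_prime n P0" and sub: "P0 \<subseteq> lin_span n (Pset n)"
    and nz: "basis (cls n [0..<n]) \<notin> P0"
  shows "\<forall>g\<in>P0. supp g \<subseteq> Lset (n * k)"
proof (induction k)
  case 0
  then show ?case unfolding Lset_def by auto
next
  case (Suc k)
  let ?z = "cls n [0..<n]"
  show ?case
  proof
    fix g assume gP: "g \<in> P0"
    then have g: "g \<in> alg n" and sg: "supp g \<subseteq> Pset n" using sub unfolding lin_span_def by auto
    have fg: "finite (supp g)" using alg_finite[OF g] .
    have "\<forall>c\<in>supp g. \<exists>s. s \<in> Sn n \<and> c = Smult n ?z s" using sg unfolding Pset_def by blast
    from bchoice[OF this] obtain \<sigma> where \<sigma>: "\<forall>c\<in>supp g. \<sigma> c \<in> Sn n \<and> c = Smult n ?z (\<sigma> c)" by blast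
    define h :: "nat list set \<Rightarrow> 'k" where "h = (\<lambda>y. \<Sum>c\<in>{c \<in> supp g. \<sigma> c = y}. g c)"
    have sh: "supp h \<subseteq> \<sigma> ` supp g"
    proof
      fix y assume "y \<in> supp h"
      then have "h y \<noteq> 0" unfolding supp_def by simp
      have "{c \<in> supp g. \<sigma> c = y} \<noteq> {}"
      proof
        assume E: "{c \<in> supp g. \<sigma> c = y} = {}"
        have "h y = 0" unfolding h_def E by simp
        then show False using \<open>h y \<noteq> 0\<close> by simp
      qed
      then show "y \<in> \<sigma> ` supp g" by blast
    qed
    have hA: "h \<in> alg n"
    proof -
      have "\<sigma> ` supp g \<subseteq> Sn n" using \<sigma> by blast
      then have "supp h \<subseteq> Sn n" using sh by (rule order_trans[rotated])
      moreover have "finite (supp h)" using sh fg by (meson finite_imageI finite_subset)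
      ultimately show ?thesis unfolding alg_def by simp
    qed
    have hg: "amult n (basis ?z) h = g"
    proof
      fix w
      have "amult n (basis ?z) h w = (\<Sum>x\<in>{?z}. \<Sum>y\<in>\<sigma> ` supp g. if Smult n x y = w then basis ?z x * h y else 0)"
        using sh fg by (intro amult_alt) (auto simp: supp_basis)
      also have "\<dots> = (\<Sum>y\<in>\<sigma> ` supp g. if Smult n ?z y = w then h y else 0)"
        by simp (simp only: basis_self mult_1_left)
      also have "\<dots> = (\<Sum>y\<in>\<sigma> ` supp g. \<Sum>c\<in>{c \<in> supp g. \<sigma> c = y}. if Smult n ?z (\<sigma> c) = w then g c else 0)"
      proof (rule sum.cong[OF refl])
        fix y
        have "(\<Sum>c\<in>{c \<in> supp g. \<sigma> c = y}. if Smult n ?z (\<sigma> c) = w then g c else 0) =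
              (\<Sum>c\<in>{c \<in> supp g. \<sigma> c = y}. if Smult n ?z y = w then g c else 0)"
          by (rule sum.cong) auto
        also have "\<dots> = (if Smult n ?z y = w then h y else 0)"
          unfolding h_def by simp
        finally show "(if Smult n ?z y = w then h y else 0) =
           (\<Sum>c\<in>{c \<in> supp g. \<sigma> c = y}. if Smult n ?z (\<sigma> c) = w then g c else 0)" by simp
      qed
      also have "\<dots> = (\<Sum>c\<in>supp g. if Smult n ?z (\<sigma> c) = w then g c else 0)"
        by (rule sum.image_gen[OF fg, symmetric])
      also have "\<dots> = (\<Sum>c\<in>supp g. if c = w then g c else 0)"
      proof (rule sum.cong[OF refl])
        fix c assume "c \<in> supp g"
        then have "Smult n ?z (\<sigma> c) = c" using \<sigma> by metis
        then show "(if Smult n ?z (\<sigma> c) = w then g c else 0) = (if c = w then g c else 0)" by simp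
      qed
      also have "\<dots> = g w" using fg by (simp add: supp_def)
      finally show "amult n (basis ?z) h w = g w" .
    qed
    have "basis ?z \<in> P0 \<or> h \<in> P0" using prime_step[OF Q hA] hg gP by simp
    then have hP: "h \<in> P0" using nz by blast
    then have shL: "supp h \<subseteq> Lset (n * k)" using Suc.IH by blast
    show "supp g \<subseteq> Lset (n * Suc k)"
    proof
      fix c assume "c \<in> supp g"
      then have "c \<in> supp (amult n (basis ?z) h)" using hg by simp
      then obtain x y where xy: "x \<in> supp (basis ?z :: nat list set \<Rightarrow> 'k)" "y \<in> supp h" "c = Smult n x y"
        using supp_amult by blast
      have x: "x = ?z" using xy(1) supp_basis by (metis singletonD)
      obtain w' where w': "w' \<in> words n" "y = cls n w'" using xy(2) alg_sub[OF hA] Sn_iff by blast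
      have "w' \<in> y" using w' by (simp add: cls_mem)
      then have lw: "n * k \<le> length w'" using shL xy(2) unfolding Lset_def by blast
      have c: "c = cls n ([0..<n] @ w')" using xy(3) x w' by (simp add: Smult_cls)
      show "c \<in> Lset (n * Suc k)"
      proof (unfold Lset_def, intro CollectI ballI)
        fix w assume "w \<in> c"
        then have "([0..<n] @ w', w) \<in> cong_S n" using c cls_mem by blast
        then have "length w = n + length w'" using cong_length by fastforce
        then show "n * Suc k \<le> length w" using lw by simp
      qed
    qed
  qed
qed

lemma height:
  fixes P0 :: "(nat list set \<Rightarrow> 'k::field) set"
  assumes n: "n \<ge> 3" and Q: "alg_prime n P0" and nz: "P0 \<noteq> {\<lambda>_. 0}" and sub: "P0 \<subseteq> lin_span n (Pset n)"
  shows "P0 = lin_span n (Pset n)"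
proof -
  have I: "alg_ideal n P0" using Q unfolding alg_prime_def by simp
  have bz: "basis (cls n [0..<n]) \<in> P0"
  proof (rule ccontr)
    assume nb: "basis (cls n [0..<n]) \<notin> P0"
    have "(\<lambda>_. 0) \<in> P0" using I unfolding alg_ideal_def by simp
    then obtain g where gP: "g \<in> P0" and gnz: "g \<noteq> (\<lambda>_. 0)" using nz by blast
    then obtain c where "g c \<noteq> 0" by auto
    then have cs: "c \<in> supp g" unfolding supp_def by simp
    have "c \<in> Sn n" using cs gP I alg_sub unfolding alg_ideal_def by blast
    then obtain w where w: "w \<in> words n" "c = cls n w" using Sn_iff by blast
    have "w \<in> c" using w by (simp add: cls_mem)
    moreover have "c \<in> Lset (n * Suc (length w))" using height_aux[OF Q sub nb] gP cs by blast
    ultimately have "n * Suc (length w) \<le> length w" unfolding Lset_def by blast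
    moreover have "1 * Suc (length w) \<le> n * Suc (length w)" using n by (intro mult_le_mono1) simp
    ultimately show False by simp
  qed
  show ?thesis using KP_sub[OF I bz] sub by blast
qed



theorem lemma2p5:
  fixes n :: nat and P :: "nat list set set"
  assumes "n \<ge> 3"
    and "P = {Smult n (cls n [0..<n]) s | s. s \<in> Sn n}"
  shows "mon_prime (Sn n) (Smult n) P
    \<and> (\<forall>Q :: (nat list set \<Rightarrow> 'k::field) set.
           alg_prime n Q \<and> (\<exists>s\<in>Sn n. basis s \<in> Q) \<longrightarrow> lin_span n P \<subseteq> Q)
    \<and> alg_prime n (lin_span n P :: (nat list set \<Rightarrow> 'k::field) set)
    \<and> (\<forall>P0 :: (nat list set \<Rightarrow> 'k::field) set.
           alg_prime n P0 \<and> P0 \<noteq> {\<lambda>_. 0} \<and> P0 \<subseteq> lin_span n P \<longrightarrow> P0 = lin_span n P)"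
proof -
  have PP: "P = Pset n" using assms(2) unfolding Pset_def .
  show ?thesis unfolding PP
  proof (intro conjI allI impI)
    show "mon_prime (Sn n) (Smult n) (Pset n)" using mon_part[OF assms(1)] .
  next
    fix Q :: "(nat list set \<Rightarrow> 'k::field) set"
    assume H: "alg_prime n Q \<and> (\<exists>s\<in>Sn n. basis s \<in> Q)"
    then obtain s where s: "s \<in> Sn n" "basis s \<in> Q" by blast
    have bz: "basis (cls n [0..<n]) \<in> Q" using z_from_s[OF conjunct1[OF H] s] .
    have "alg_ideal n Q" using H unfolding alg_prime_def by simp
    then show "lin_span n (Pset n) \<subseteq> Q" using KP_sub bz by blast
  next
    show "alg_prime n (lin_span n (Pset n) :: (nat list set \<Rightarrow> 'k::field) set)"
      using KP_prime[OF assms(1)] .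
  next
    fix P0 :: "(nat list set \<Rightarrow> 'k::field) set"
    assume H: "alg_prime n P0 \<and> P0 \<noteq> {\<lambda>_. 0} \<and> P0 \<subseteq> lin_span n (Pset n)"
    then show "P0 = lin_span n (Pset n)" using height[OF assms(1)] by blast
  qed
qed

end
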